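(* Let $n\ge1$, $\sigma^2>0$, $\alpha>0$, $Y$ a random vector in $\mathbb{R}^n$, and $\omega\sim\mathcal{N}(0,\sigma^2I_n)$ independent of $Y$. Let $g:\mathbb{R}^n\to\mathbb{R}^n$ be such that the quantities below are well defined. Define $$\overline{\mathrm{CV}}_\alpha=\big\|Y-\mathbb{E}[g(Y+\sqrt\alpha\,\omega)\mid Y]\big\|_2^2+\frac{2}{\sqrt\alpha}\,\mathbb{E}\big[\omega^\top g(Y+\sqrt\alpha\,\omega)\mid Y\big].$$ Then $\overline{\mathrm{CV}}_\alpha=\mathrm{SURE}(g*\varphi_{\alpha\sigma^2})$.
   Context: $\varphi_{s}$ is the density of $\mathcal{N}(0,sI_n)$, and $g*\varphi_s(y)=\int g(y-z)\varphi_s(z)\,\mathrm{d}z$ (componentwise). For a differentiable $h:\mathbb{R}^n\to\mathbb{R}^n$, Stein's unbiased risk estimate is $\mathrm{SURE}(h)=\|Y-h(Y)\|_2^2+2\sigma^2\,\nabla\cdot h(Y)$, where $\nabla\cdot h=\sum_{i=1}^n\partial h_i/\partial y_i$ is the divergence. *)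

theory Defs
  imports "HOL-Analysis.Analysis"
begin

definition gauss_density :: "real \<Rightarrow> real^'n \<Rightarrow> real" where
  "gauss_density s z = (2 * pi * s) powr (- real CARD('n) / 2) * exp (- (norm z)\<^sup>2 / (2 * s))"

definition gauss_conv :: "(real^'n \<Rightarrow> real^'n) \<Rightarrow> real \<Rightarrow> real^'n \<Rightarrow> real^'n" where
  "gauss_conv g s y = (\<integral>z. gauss_density s z *\<^sub>R g (y - z) \<partial>lborel)"

definition divergence :: "(real^'n \<Rightarrow> real^'n) \<Rightarrow> real^'n \<Rightarrow> real" where
  "divergence h y = (\<Sum>i\<in>UNIV. deriv (\<lambda>t. h (y + t *\<^sub>R axis i 1) $ i) 0)"

definition SURE :: "real \<Rightarrow> (real^'n \<Rightarrow> real^'n) \<Rightarrow> real^'n \<Rightarrow> real" where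
  "SURE sigma2 h y = (norm (y - h y))\<^sup>2 + 2 * sigma2 * divergence h y"

end

theory Submission
  imports Defs
begin

lemma deriv_from_bound:
  fixes F :: "real \<Rightarrow> real"
  assumes "\<And>t. \<bar>t\<bar> \<le> 1 \<Longrightarrow> \<bar>F t - F 0 - t * D\<bar> \<le> M * t\<^sup>2"
  shows "(F has_real_derivative D) (at 0)"
proof -
  have "((\<lambda>t. (F t - F 0) / (t - 0) - D) \<longlongrightarrow> 0) (at 0)"
  proof (rule Lim_null_comparison)
    show "eventually (\<lambda>t. norm ((F t - F 0) / (t - 0) - D) \<le> \<bar>M\<bar> * \<bar>t\<bar>) (at 0)"
    proof -
      have pw: "norm ((F t - F 0) / (t - 0) - D) \<le> \<bar>M\<bar> * \<bar>t\<bar>" if t: "t \<noteq> 0" "\<bar>t\<bar> \<le> 1" for t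
      proof -
      have "(F t - F 0) / (t - 0) - D = (F t - F 0 - t * D) / t" using t by (simp add: field_simps)
      then have "norm ((F t - F 0) / (t - 0) - D) = \<bar>F t - F 0 - t * D\<bar> / \<bar>t\<bar>" by simp
      also have "\<dots> \<le> M * t\<^sup>2 / \<bar>t\<bar>" using assms[OF t(2)] by (intro divide_right_mono) auto
      also have "\<dots> = M * \<bar>t\<bar>"
      proof -
        have tt: "t\<^sup>2 = \<bar>t\<bar> * \<bar>t\<bar>" by (simp add: power2_eq_square)
        show ?thesis unfolding tt using t(1) by (simp del: abs_mult_self_eq)
      qed
      also have "\<dots> \<le> \<bar>M\<bar> * \<bar>t\<bar>" by (intro mult_right_mono) auto
      finally show ?thesis .
      qed
      show ?thesis
      proof (rule eventually_at[THEN iffD2], intro exI[of _ 1] conjI ballI impI)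
        fix x :: real assume "x \<noteq> 0 \<and> dist x 0 < 1"
        then show "norm ((F x - F 0) / (x - 0) - D) \<le> \<bar>M\<bar> * \<bar>x\<bar>"
          by (intro pw) (auto simp: dist_real_def)
      qed simp
    qed
    show "((\<lambda>t. \<bar>M\<bar> * \<bar>t\<bar>) \<longlongrightarrow> 0) (at 0)"
      by (auto intro!: tendsto_eq_intros)
  qed
  then show ?thesis
    unfolding has_field_derivative_iff LIM_zero_iff .
qed

lemma exp_taylor2: fixes q :: real shows "\<bar>exp q - 1 - q\<bar> \<le> q\<^sup>2 * exp \<bar>q\<bar>"
proof -
  obtain t where t: "\<bar>t\<bar> \<le> \<bar>q\<bar>" "exp q = (\<Sum>m<2. (q ^ m) / fact m) + (exp t / fact 2) * q ^ 2"
    using Maclaurin_exp_le[of q 2] by blast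
  then have e: "exp q - 1 - q = exp t / 2 * q\<^sup>2" by (simp add: eval_nat_numeral)
  have "exp t \<le> exp \<bar>q\<bar>" using t(1) by simp
  have "\<bar>exp q - 1 - q\<bar> = exp t / 2 * q\<^sup>2" unfolding e by (rule abs_of_nonneg) simp
  also have "\<dots> \<le> exp \<bar>q\<bar> * q\<^sup>2" 
  proof (rule mult_right_mono)
    show "exp t / 2 \<le> exp \<bar>q\<bar>" using \<open>exp t \<le> exp \<bar>q\<bar>\<close> exp_gt_zero[of t] by linarith
  qed simp
  finally show ?thesis by (simp add: mult_ac)
qed

lemma sq_exp_le: "(u::real) \<ge> 0 \<Longrightarrow> u\<^sup>2 * exp u \<le> 2 * exp (2 * u)"
proof -
  assume u: "u \<ge> 0"
  have "u\<^sup>2 \<le> 2 * exp u" using exp_lower_Taylor_quadratic[of u] u by simp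
  then have "u\<^sup>2 * exp u \<le> 2 * exp u * exp u" by (intro mult_right_mono) auto
  also have "\<dots> = 2 * exp (2 * u)" by (simp add: exp_add[symmetric])
  finally show ?thesis .
qed

lemma pw_err_core:
  fixes s t x :: real
  assumes s: "s > 0" and t: "\<bar>t\<bar> \<le> 1"
  shows "\<bar>exp (- t * x / s - t\<^sup>2 / (2 * s)) - 1 + t * x / s\<bar> \<le> t\<^sup>2 * ((2 * exp (1 / s) + 1 / (2 * s)) * exp (2 * \<bar>x\<bar> / s))"
proof -
  define q where "q = - t * x / s - t\<^sup>2 / (2 * s)"
  define u where "u = \<bar>x\<bar> / s + 1 / (2 * s)"
  have u0: "u \<ge> 0" using s by (simp add: u_def)
  have "\<bar>t\<bar> * \<bar>t\<bar> \<le> \<bar>t\<bar> * 1" using t by (intro mult_left_mono) auto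
  then have tt: "t\<^sup>2 \<le> \<bar>t\<bar>" by (metis power2_eq_square abs_mult_self_eq mult_1_right)
  have "\<bar>q\<bar> \<le> \<bar>- t * x / s\<bar> + \<bar>t\<^sup>2 / (2 * s)\<bar>"
    unfolding q_def by (rule abs_triangle_ineq4)
  also have "\<dots> = \<bar>t\<bar> * \<bar>x\<bar> / s + t\<^sup>2 / (2 * s)" using s by (simp add: abs_mult abs_divide)
  also have "\<dots> \<le> \<bar>t\<bar> * u"
    using s tt by (simp add: u_def distrib_left divide_right_mono)
  finally have qb: "\<bar>q\<bar> \<le> \<bar>t\<bar> * u" .
  then have qu: "\<bar>q\<bar> \<le> u" using t u0 by (smt (verit) mult_left_le_one_le)
  have q2: "q\<^sup>2 \<le> t\<^sup>2 * u\<^sup>2"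
  proof -
    have "q\<^sup>2 = \<bar>q\<bar>\<^sup>2" by simp
    also have "\<dots> \<le> (\<bar>t\<bar> * u)\<^sup>2" using qb by (intro power_mono) auto
    finally show ?thesis by (simp add: power_mult_distrib)
  qed
  have "\<bar>exp q - 1 - q\<bar> \<le> q\<^sup>2 * exp \<bar>q\<bar>" by (rule exp_taylor2)
  also have "\<dots> \<le> t\<^sup>2 * u\<^sup>2 * exp u" using q2 qu by (intro mult_mono) auto
  also have "\<dots> \<le> t\<^sup>2 * (2 * exp (2 * u))" using sq_exp_le[OF u0] by (simp add: mult.assoc mult_left_mono)
  also have "2 * exp (2 * u) = 2 * exp (1 / s) * exp (2 * \<bar>x\<bar> / s)"
    unfolding u_def using s by (simp add: exp_add[symmetric] field_simps)
  finally have A: "\<bar>exp q - 1 - q\<bar> \<le> t\<^sup>2 * (2 * exp (1 / s) * exp (2 * \<bar>x\<bar> / s))" .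
  have B: "t\<^sup>2 / (2 * s) \<le> t\<^sup>2 * (1 / (2 * s) * exp (2 * \<bar>x\<bar> / s))"
  proof -
    have "1 \<le> exp (2 * \<bar>x\<bar> / s)" using s by simp
    then have h1: "1 / (2 * s) * 1 \<le> 1 / (2 * s) * exp (2 * \<bar>x\<bar> / s)" using s by (intro mult_left_mono) auto
    have "t\<^sup>2 * (1 / (2 * s) * 1) \<le> t\<^sup>2 * (1 / (2 * s) * exp (2 * \<bar>x\<bar> / s))"
      by (rule mult_left_mono[OF h1]) simp
    then show ?thesis using s by simp
  qed
  have eq: "exp q - 1 + t * x / s = (exp q - 1 - q) - t\<^sup>2 / (2 * s)" unfolding q_def by (simp add: field_simps)
  have "\<bar>exp q - 1 + t * x / s\<bar> \<le> \<bar>exp q - 1 - q\<bar> + t\<^sup>2 / (2 * s)"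
    unfolding eq by (rule order_trans[OF abs_triangle_ineq4]) (use s in simp)
  also have "\<dots> \<le> t\<^sup>2 * (2 * exp (1 / s) * exp (2 * \<bar>x\<bar> / s)) + t\<^sup>2 * (1 / (2 * s) * exp (2 * \<bar>x\<bar> / s))"
    using A B by linarith
  also have "\<dots> = t\<^sup>2 * ((2 * exp (1 / s) + 1 / (2 * s)) * exp (2 * \<bar>x\<bar> / s))" by (simp add: algebra_simps)
  finally show ?thesis unfolding q_def .
qed



lemma nn_integral_affine_eucl:
  fixes t :: "'a::euclidean_space" and f :: "'a \<Rightarrow> ennreal"
  assumes f[measurable]: "f \<in> borel_measurable borel" and c: "c \<noteq> 0"
  shows "(\<integral>\<^sup>+x. f x \<partial>lborel) = ennreal (\<bar>c\<bar>^DIM('a)) * (\<integral>\<^sup>+x. f (t + c *\<^sub>R x) \<partial>lborel)"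
  by (subst lborel_affine[OF c, of t])
     (simp add: nn_integral_density nn_integral_distr nn_integral_cmult)

lemma integrable_affine_eucl:
  fixes f :: "'a::euclidean_space \<Rightarrow> 'b :: {banach, second_countable_topology}"
  assumes f: "integrable lborel f"
  shows "c \<noteq> 0 \<Longrightarrow> integrable lborel (\<lambda>x. f (t + c *\<^sub>R x))"
  using f f[THEN borel_measurable_integrable] unfolding integrable_iff_bounded
  by (subst (asm) nn_integral_affine_eucl[where c=c and t=t]) (auto simp: ennreal_mult_less_top)

lemma integrable_affine_eucl_iff:
  fixes f :: "'a::euclidean_space \<Rightarrow> 'b :: {banach, second_countable_topology}"
  shows "c \<noteq> 0 \<Longrightarrow> integrable lborel (\<lambda>x. f (t + c *\<^sub>R x)) \<longleftrightarrow> integrable lborel f"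
  using
    integrable_affine_eucl[of f c t]
    integrable_affine_eucl[of "\<lambda>x. f (t + c *\<^sub>R x)" "1/c" "-t /\<^sub>R c"]
  by (auto simp add: field_simps)

lemma integral_affine_eucl:
  fixes f :: "'a::euclidean_space \<Rightarrow> 'b :: {banach, second_countable_topology}" and c :: real
  assumes c: "c \<noteq> 0" shows "(\<integral>x. f x \<partial> lborel) = (\<bar>c\<bar>^DIM('a)) *\<^sub>R (\<integral>x. f (t + c *\<^sub>R x) \<partial>lborel)"
proof cases
  assume f[measurable]: "integrable lborel f" then show ?thesis
    using c f f[THEN borel_measurable_integrable] f[THEN integrable_affine_eucl, of c t]
    by (subst lborel_affine[OF c, of t])
       (simp add: integral_density integral_distr)
next
  assume "\<not> integrable lborel f" with c show ?thesis
    by (simp add: integrable_affine_eucl_iff not_integrable_integral_eq)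
qed

lemma gd_pos: "s > 0 \<Longrightarrow> gauss_density s z > 0"
  unfolding gauss_density_def by simp

lemma gd_nz: "s > 0 \<Longrightarrow> gauss_density s z \<noteq> 0"
  using gd_pos[of s z] by linarith

lemma gd_nonneg: "s > 0 \<Longrightarrow> gauss_density s z \<ge> 0"
  using gd_pos[of s z] by linarith

lemma vec_nth_meas[measurable]:
  "f \<in> borel_measurable M \<Longrightarrow> (\<lambda>x. (f x :: real^'n) $ i) \<in> borel_measurable M"
  by (rule borel_measurable_continuous_on[of "\<lambda>v. v $ i"])
     (auto intro: linear_continuous_on bounded_linear_vec_nth)

lemma gd_meas[measurable]: "gauss_density s \<in> borel_measurable borel"
  unfolding gauss_density_def by measurable

lemma gd_shift:
  fixes z :: "real^'n"
  assumes "s > 0"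
  shows "gauss_density s (t *\<^sub>R axis i 1 + z) = gauss_density s z * exp (- t * z $ i / s - t\<^sup>2 / (2 *  s))"
proof -
  have "(norm (t *\<^sub>R axis i 1 + z))\<^sup>2 = (t *\<^sub>R axis i 1 + z) \<bullet> (t *\<^sub>R axis i 1 + z)"
    by (rule power2_norm_eq_inner)
  also have "\<dots> = t\<^sup>2 * (axis i 1 \<bullet> axis i (1::real)) + 2*t*(axis i 1 \<bullet> z) + z \<bullet> z"
    by (simp add: inner_add_left inner_add_right inner_commute[of z "axis i 1"] power2_eq_square algebra_simps)
  also have "\<dots> = t\<^sup>2 + 2*t*z$i + (norm z)\<^sup>2"
    by (simp add: inner_axis_axis inner_axis' power2_norm_eq_inner)
  finally have "(norm (t *\<^sub>R axis i 1 + z))\<^sup>2 = t\<^sup>2 + 2*t*z$i + (norm z)\<^sup>2" .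
  then have "- (norm (t *\<^sub>R axis i 1 + z))\<^sup>2 / (2 *  s) = - (norm z)\<^sup>2 / (2 *  s) + (- t * z $ i / s - t\<^sup>2 / (2 *  s))"
    using assms by (simp add: field_simps)
  then have "exp (- (norm (t *\<^sub>R axis i 1 + z))\<^sup>2 / (2 *  s)) = exp (- (norm z)\<^sup>2 / (2 *  s)) * exp (- t * z $ i / s - t\<^sup>2 / (2 *  s))"
    by (simp only: exp_add)
  then show ?thesis unfolding gauss_density_def by simp
qed

lemma gd_scale:
  fixes w :: "real^'n"
  assumes "s > 0" "a > 0"
  shows "sqrt a ^ CARD('n) * gauss_density (a* s) ((- sqrt a) *\<^sub>R w) = gauss_density s w"
proof -
  have e: "(norm ((- sqrt a) *\<^sub>R w))\<^sup>2 / (2 * (a* s)) = (norm w)\<^sup>2 / (2 *  s)"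
    using assms by (simp add: power_mult_distrib)
  have "sqrt a ^ CARD('n) * (2 * pi * (a* s)) powr (- real CARD('n) / 2) = (2 * pi* s) powr (- real CARD('n) / 2)"
  proof -
    have "sqrt a ^ CARD('n) = a powr (real CARD('n) / 2)"
      using assms by (simp add: sqrt_def root_powr_inverse powr_realpow[symmetric] powr_powr)
    moreover have "(2 * pi * (a* s)) powr (- real CARD('n) / 2) = a powr (- real CARD('n) / 2) * (2 * pi* s) powr (- real CARD('n) / 2)"
      using assms by (simp add: powr_mult[symmetric] mult_ac)
    ultimately show ?thesis using assms by (simp add: powr_add[symmetric])
  qed
  then show ?thesis unfolding gauss_density_def using e by (simp add: mult_ac)
qed


context
  fixes g :: "real^'n \<Rightarrow> real^'n" and s :: real
  assumes s: "s > 0" and H: "\<And>x. integrable lborel (\<lambda>z. gauss_density s z *\<^sub>R g (x - z))"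
begin

lemma g_meas[measurable]: "g \<in> borel_measurable borel"
proof -
  have "(\<lambda>z. gauss_density s z *\<^sub>R g (0 - z)) \<in> borel_measurable lborel"
    using H[of 0] by (rule borel_measurable_integrable)
  then have m[measurable]: "(\<lambda>z. gauss_density s z *\<^sub>R g (- z)) \<in> borel_measurable borel" by simp
  have "(\<lambda>z. (1 / gauss_density s z) *\<^sub>R (gauss_density s z *\<^sub>R g (- z))) \<in> borel_measurable borel"
    by measurable
  moreover have "(\<lambda>z. (1 / gauss_density s z) *\<^sub>R (gauss_density s z *\<^sub>R g (- z))) = (\<lambda>z. g (-z))"
    using gd_nz[OF s] by (auto simp: fun_eq_iff)
  ultimately have "(\<lambda>z. g(-z)) \<in> borel_measurable borel" by simp
  from measurable_compose[OF borel_measurable_uminus[OF measurable_ident] this]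
  show ?thesis by simp
qed

lemma int_normg: "integrable lborel (\<lambda>z. gauss_density s z * norm (g (x - z)))"
proof -
  have eq: "(\<lambda>z. norm (gauss_density s z *\<^sub>R g (x - z))) = (\<lambda>z. gauss_density s z * norm (g (x - z)))"
    by (simp add: fun_eq_iff abs_of_nonneg gd_nonneg[OF s])
  have "integrable lborel (\<lambda>z. norm (gauss_density s z *\<^sub>R g (x - z)))"
    using H by (rule integrable_norm)
  then show ?thesis unfolding eq .
qed

lemma int_shift: "integrable lborel (\<lambda>z. gauss_density s (c *\<^sub>R axis i 1 + z) * norm (g (y - z)))"
  using integrable_affine_eucl[OF int_normg[of "y + c *\<^sub>R axis i 1"], of 1 "c *\<^sub>R axis i 1"]
  by (simp add: algebra_simps)

lemma int_B: "integrable lborel (\<lambda>z. gauss_density s z * exp (a * \<bar>z$i\<bar> / s) * norm (g (y - z)))"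
proof (rule Bochner_Integration.integrable_bound)
  show "integrable lborel (\<lambda>z. exp (a\<^sup>2 / (2 * s)) * (gauss_density s ((-a) *\<^sub>R axis i 1 + z) * norm (g (y - z))
      + gauss_density s (a *\<^sub>R axis i 1 + z) * norm (g (y - z))))"
    using int_shift[of "-a" i y] int_shift[of a i y] by (intro integrable_mult_right integrable_add) auto
  show "(\<lambda>z. gauss_density s z * exp (a * \<bar>z$i\<bar> / s) * norm (g (y - z))) \<in> borel_measurable lborel"
    by measurable
  show "AE z in lborel. norm (gauss_density s z * exp (a * \<bar>z$i\<bar> / s) * norm (g (y - z)))
     \<le> norm (exp (a\<^sup>2 / (2 * s)) * (gauss_density s ((-a) *\<^sub>R axis i 1 + z) * norm (g (y - z))
      + gauss_density s (a *\<^sub>R axis i 1 + z) * norm (g (y - z))))"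
  proof (rule AE_I2)
    fix z :: "real^'n"
    have p: "gauss_density s z > 0" using gd_pos[OF s] .
    have e1: "exp (a\<^sup>2 / (2 * s)) * gauss_density s ((-a) *\<^sub>R axis i 1 + z) = gauss_density s z * exp (a * z$i / s)"
      unfolding gd_shift[OF s] by (simp add: mult_ac exp_add[symmetric])
    have e2: "exp (a\<^sup>2 / (2 * s)) * gauss_density s (a *\<^sub>R axis i 1 + z) = gauss_density s z * exp (- a * z$i / s)"
      unfolding gd_shift[OF s] by (simp add: mult_ac exp_add[symmetric])
    have "exp (a * \<bar>z$i\<bar> / s) \<le> exp (a * z$i / s) + exp (- a * z$i / s)"
      by (cases "z$i \<ge> 0") (auto simp: abs_if add_increasing add_increasing2)
    then have "gauss_density s z * exp (a * \<bar>z$i\<bar> / s) * norm (g (y - z)) \<le>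
       (gauss_density s z * exp (a * z$i / s) + gauss_density s z * exp (- a * z$i / s)) * norm (g (y - z))"
    proof (intro mult_right_mono)
      have "gauss_density s z * exp (a * \<bar>z$i\<bar> / s) \<le> gauss_density s z * (exp (a * z$i / s) + exp (- a * z$i / s))"
        using p \<open>exp (a * \<bar>z$i\<bar> / s) \<le> _\<close> by (intro mult_left_mono) auto
      then show "gauss_density s z * exp (a * \<bar>z$i\<bar> / s) \<le> gauss_density s z * exp (a * z$i / s) + gauss_density s z * exp (- a * z$i / s)"
        by (simp add: distrib_left)
    qed simp
    also have "\<dots> = exp (a\<^sup>2 / (2 * s)) * (gauss_density s ((-a) *\<^sub>R axis i 1 + z) * norm (g (y - z))
      + gauss_density s (a *\<^sub>R axis i 1 + z) * norm (g (y - z)))"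
      unfolding e1[symmetric] e2[symmetric] by (simp add: algebra_simps)
    finally show "norm (gauss_density s z * exp (a * \<bar>z$i\<bar> / s) * norm (g (y - z)))
     \<le> norm (exp (a\<^sup>2 / (2 * s)) * (gauss_density s ((-a) *\<^sub>R axis i 1 + z) * norm (g (y - z))
      + gauss_density s (a *\<^sub>R axis i 1 + z) * norm (g (y - z))))"
      using p by (simp add: abs_of_nonneg)
  qed
qed


lemma conv_comp: "gauss_conv g s x $ i = (\<integral>z. gauss_density s z * g (x - z) $ i \<partial>lborel)"
proof -
  have "(\<integral>z. (gauss_density s z *\<^sub>R g (x - z)) $ i \<partial>lborel) = (gauss_conv g s x) $ i"
    unfolding gauss_conv_def by (rule integral_bounded_linear[OF bounded_linear_vec_nth H])
  then show ?thesis by simp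
qed

lemma F_eq: "gauss_conv g s (y + t *\<^sub>R axis i 1) $ i =
  (\<integral>z. gauss_density s z * exp (- t * z $ i / s - t\<^sup>2 / (2 * s)) * g (y - z) $ i \<partial>lborel)"
proof -
  have c: "\<And>z. y + t *\<^sub>R axis i 1 - (t *\<^sub>R axis i 1 + z) = y - z" by (simp add: algebra_simps)
  have "(\<integral>z. gauss_density s z * g (y + t *\<^sub>R axis i 1 - z) $ i \<partial>lborel) =
     (\<integral>z. gauss_density s (t *\<^sub>R axis i 1 + z) * g (y - z) $ i \<partial>lborel)"
    using integral_affine_eucl[where c=1 and f="\<lambda>z. gauss_density s z * g (y + t *\<^sub>R axis i 1 - z) $ i" and t="t *\<^sub>R axis i 1"]
    by (simp add: c)
  also have "\<dots> = (\<integral>z. gauss_density s z * exp (- t * z $ i / s - t\<^sup>2 / (2 * s)) * g (y - z) $ i \<partial>lborel)"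
    by (simp only: gd_shift[OF s])
  finally show ?thesis by (simp add: conv_comp)
qed

lemma int_F: "integrable lborel (\<lambda>z. gauss_density s z * exp (- t * z $ i / s - t\<^sup>2 / (2 * s)) * g (y - z) $ i)"
proof (rule Bochner_Integration.integrable_bound[OF int_shift[of t i y]])
  show "(\<lambda>z. gauss_density s z * exp (- t * z $ i / s - t\<^sup>2 / (2 * s)) * g (y - z) $ i) \<in> borel_measurable lborel"
    by measurable
  show "AE z in lborel. norm (gauss_density s z * exp (- t * z $ i / s - t\<^sup>2 / (2 * s)) * g (y - z) $ i)
     \<le> norm (gauss_density s (t *\<^sub>R axis i 1 + z) * norm (g (y - z)))"
  proof (rule AE_I2)
    fix z :: "real^'n"
    have p: "gauss_density s z \<ge> 0" using gd_nonneg[OF s] .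
    show "norm (gauss_density s z * exp (- t * z $ i / s - t\<^sup>2 / (2 * s)) * g (y - z) $ i)
     \<le> norm (gauss_density s (t *\<^sub>R axis i 1 + z) * norm (g (y - z)))"
      unfolding gd_shift[OF s] using p component_le_norm_cart[of "g (y - z)" i]
      by (simp add: abs_mult mult_left_mono)
  qed
qed

lemma int_D: "integrable lborel (\<lambda>z. gauss_density s z * (- z $ i / s) * g (y - z) $ i)"
proof (rule Bochner_Integration.integrable_bound[OF int_B[of 1 i y]])
  show "(\<lambda>z. gauss_density s z * (- z $ i / s) * g (y - z) $ i) \<in> borel_measurable lborel"
    by measurable
  show "AE z in lborel. norm (gauss_density s z * (- z $ i / s) * g (y - z) $ i)
     \<le> norm (gauss_density s z * exp (1 * \<bar>z $ i\<bar> / s) * norm (g (y - z)))"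
  proof (rule AE_I2)
    fix z :: "real^'n"
    have p: "gauss_density s z \<ge> 0" using gd_nonneg[OF s] .
    have e: "\<bar>z $ i\<bar> / s \<le> exp (\<bar>z $ i\<bar> / s)" using exp_ge_add_one_self[of "\<bar>z $ i\<bar> / s"] by linarith
    have h: "\<bar>- z $ i / s\<bar> * \<bar>g (y - z) $ i\<bar> \<le> exp (\<bar>z $ i\<bar> / s) * norm (g (y - z))"
      using s e component_le_norm_cart[of "g (y - z)" i] by (intro mult_mono) (auto simp: abs_divide)
    have m: "gauss_density s z * (\<bar>- z $ i / s\<bar> * \<bar>g (y - z) $ i\<bar>) \<le> gauss_density s z * (exp (\<bar>z $ i\<bar> / s) * norm (g (y - z)))"
      by (rule mult_left_mono[OF h p])
    show "norm (gauss_density s z * (- z $ i / s) * g (y - z) $ i)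
     \<le> norm (gauss_density s z * exp (1 * \<bar>z $ i\<bar> / s) * norm (g (y - z)))"
      using m p by (simp add: abs_mult abs_of_nonneg mult.assoc)
  qed
qed


lemma deriv_i: "deriv (\<lambda>t. gauss_conv g s (y + t *\<^sub>R axis i 1) $ i) 0 =
   (\<integral>z. gauss_density s z * (- z $ i / s) * g (y - z) $ i \<partial>lborel)"
proof -
  define A where "A t z = gauss_density s z * exp (- t * z $ i / s - t\<^sup>2 / (2 * s)) * g (y - z) $ i" for t z
  define Dz where "Dz z = gauss_density s z * (- z $ i / s) * g (y - z) $ i" for z
  define F where "F t = (\<integral>z. A t z \<partial>lborel)" for t
  define D where "D = (\<integral>z. Dz z \<partial>lborel)"
  define C where "C = 2 * exp (1 / s) + 1 / (2 * s)"
  define B where "B z = gauss_density s z * exp (2 * \<bar>z $ i\<bar> / s) * norm (g (y - z))" for z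
  have intA: "integrable lborel (A t)" for t unfolding A_def by (rule int_F)
  have intD: "integrable lborel Dz" unfolding Dz_def by (rule int_D)
  have intB: "integrable lborel B" unfolding B_def by (rule int_B)
  have "(F has_real_derivative D) (at 0)"
  proof (rule deriv_from_bound[where M="C * (\<integral>z. B z \<partial>lborel)"])
    fix t :: real assume t: "\<bar>t\<bar> \<le> 1"
    have eq: "F t - F 0 - t * D = (\<integral>z. A t z - A 0 z - t * Dz z \<partial>lborel)"
      unfolding F_def D_def using intA[of t] intA[of 0] intD
      by (simp add: integral_diff)
    have pw: "\<bar>A t z - A 0 z - t * Dz z\<bar> \<le> t\<^sup>2 * C * B z" for z
    proof -
      have p: "gauss_density s z \<ge> 0" using gd_nonneg[OF s] .
      have "A t z - A 0 z - t * Dz z = gauss_density s z * g (y - z) $ i * (exp (- t * z $ i / s - t\<^sup>2 / (2 * s)) - 1 + t * z $ i / s)"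
        unfolding A_def Dz_def by (simp add: algebra_simps)
      then have "\<bar>A t z - A 0 z - t * Dz z\<bar> = gauss_density s z * \<bar>g (y - z) $ i\<bar> * \<bar>exp (- t * z $ i / s - t\<^sup>2 / (2 * s)) - 1 + t * z $ i / s\<bar>"
        using p by (simp add: abs_mult)
      also have "\<dots> \<le> gauss_density s z * norm (g (y - z)) * (t\<^sup>2 * ((2 * exp (1 / s) + 1 / (2 * s)) * exp (2 * \<bar>z $ i\<bar> / s)))"
        using p component_le_norm_cart[of "g (y - z)" i] pw_err_core[OF s t, of "z $ i"]
        by (intro mult_mono mult_left_mono) auto
      also have "\<dots> = t\<^sup>2 * C * B z" unfolding C_def B_def by (simp add: algebra_simps)
      finally show ?thesis .
    qed
    have "\<bar>F t - F 0 - t * D\<bar> \<le> (\<integral>z. t\<^sup>2 * C * B z \<partial>lborel)"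
      unfolding eq
      by (rule integral_abs_bound_integral) (use intA intD intB pw in auto)
    also have "\<dots> = C * (\<integral>z. B z \<partial>lborel) * t\<^sup>2" by (simp add: mult_ac)
    finally show "\<bar>F t - F 0 - t * D\<bar> \<le> C * (\<integral>z. B z \<partial>lborel) * t\<^sup>2" .
  qed
  moreover have "(\<lambda>t. gauss_conv g s (y + t *\<^sub>R axis i 1) $ i) = F"
    unfolding F_def A_def by (simp add: fun_eq_iff F_eq)
  ultimately show ?thesis unfolding D_def Dz_def by (simp add: DERIV_imp_deriv)
qed

end


theorem proposition1:
  fixes g :: "real^'n \<Rightarrow> real^'n" and sigma2 alpha :: real and y :: "real^'n"
  assumes "sigma2 > 0" and "alpha > 0"
    and "\<And>x. integrable lborel (\<lambda>z. gauss_density (alpha * sigma2) z *\<^sub>R g (x - z))"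
  shows "(norm (y - (\<integral>w. gauss_density sigma2 w *\<^sub>R g (y + sqrt alpha *\<^sub>R w) \<partial>lborel)))\<^sup>2
           + 2 / sqrt alpha * (\<integral>w. gauss_density sigma2 w * (w \<bullet> g (y + sqrt alpha *\<^sub>R w)) \<partial>lborel)
         = SURE sigma2 (gauss_conv g (alpha * sigma2)) y"
proof -
  define s where "s = alpha * sigma2"
  define sa where "sa = sqrt alpha"
  have s: "s > 0" unfolding s_def using assms by simp
  have sa: "sa > 0" "sa * sa = alpha" unfolding sa_def using assms by auto
  have H: "\<And>x. integrable lborel (\<lambda>z. gauss_density s z *\<^sub>R g (x - z))" unfolding s_def by (rule assms(3))
  have sc: "sa ^ CARD('n) * gauss_density s ((- sa) *\<^sub>R w) = gauss_density sigma2 w" for w :: "real^'n"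
    unfolding s_def sa_def by (rule gd_scale) (use assms in auto)
  have A: "gauss_conv g s y = (\<integral>w. gauss_density sigma2 w *\<^sub>R g (y + sa *\<^sub>R w) \<partial>lborel)"
  proof -
    have "gauss_conv g s y = \<bar>- sa\<bar> ^ DIM(real^'n) *\<^sub>R (\<integral>w. gauss_density s (0 + (- sa) *\<^sub>R w) *\<^sub>R g (y - (0 + (- sa) *\<^sub>R w)) \<partial>lborel)"
      unfolding gauss_conv_def
      using integral_affine_eucl[where c="- sa" and f="\<lambda>z. gauss_density s z *\<^sub>R g (y - z)" and t=0] sa
      by simp
    also have "\<dots> = (\<integral>w. (sa ^ CARD('n) * gauss_density s ((- sa) *\<^sub>R w)) *\<^sub>R g (y + sa *\<^sub>R w) \<partial>lborel)"
      using sa by (simp add: scaleR_scaleR[symmetric] del: scaleR_scaleR)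
    also have "\<dots> = (\<integral>w. gauss_density sigma2 w *\<^sub>R g (y + sa *\<^sub>R w) \<partial>lborel)"
      by (simp only: sc)
    finally show ?thesis .
  qed
  define I where "I = (\<integral>w. gauss_density sigma2 w * (w \<bullet> g (y + sa *\<^sub>R w)) \<partial>lborel)"
  have J: "(\<integral>z. gauss_density s z * (z \<bullet> g (y - z)) \<partial>lborel) = - sa * I"
  proof -
    have "(\<integral>z. gauss_density s z * (z \<bullet> g (y - z)) \<partial>lborel) =
       \<bar>- sa\<bar> ^ DIM(real^'n) *\<^sub>R (\<integral>w. gauss_density s (0 + (- sa) *\<^sub>R w) * ((0 + (- sa) *\<^sub>R w) \<bullet> g (y - (0 + (- sa) *\<^sub>R w))) \<partial>lborel)"
      using integral_affine_eucl[where c="- sa" and f="\<lambda>z. gauss_density s z * (z \<bullet> g (y - z))" and t=0] sa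
      by simp
    also have "\<dots> = (\<integral>w. - sa * ((sa ^ CARD('n) * gauss_density s ((- sa) *\<^sub>R w)) * (w \<bullet> g (y + sa *\<^sub>R w))) \<partial>lborel)"
      using sa by (simp add: mult_ac)
    also have "\<dots> = - sa * I"
      unfolding I_def sc by simp
    finally show ?thesis .
  qed
  have Dv: "divergence (gauss_conv g s) y = (\<Sum>i\<in>UNIV. \<integral>z. gauss_density s z * (- z $ i / s) * g (y - z) $ i \<partial>lborel)"
    unfolding divergence_def by (simp add: deriv_i[OF s H])
  also have "\<dots> = (\<integral>z. (\<Sum>i\<in>UNIV. gauss_density s z * (- z $ i / s) * g (y - z) $ i) \<partial>lborel)"
    by (rule Bochner_Integration.integral_sum[where f="\<lambda>i z. gauss_density s z * (- z $ i / s) * g (y - z) $ i", symmetric]) (rule int_D[OF s H])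
  also have "\<dots> = (\<integral>z. (- 1 / s) * (gauss_density s z * (z \<bullet> g (y - z))) \<partial>lborel)"
  proof (rule Bochner_Integration.integral_cong[OF refl])
    fix z :: "real^'n"
    have "(\<Sum>i\<in>UNIV. gauss_density s z * (- z $ i / s) * g (y - z) $ i) = (\<Sum>i\<in>UNIV. (- 1 / s) * (gauss_density s z * (z $ i * g (y - z) $ i)))"
      by (rule sum.cong) (auto simp: field_simps)
    then show "(\<Sum>i\<in>UNIV. gauss_density s z * (- z $ i / s) * g (y - z) $ i) = (- 1 / s) * (gauss_density s z * (z \<bullet> g (y - z)))"
      by (simp only: inner_vec_def sum_distrib_left inner_real_def)
  qed
  also have "\<dots> = (- 1 / s) * (- sa * I)" by (simp add: J)
  finally have Dv: "divergence (gauss_conv g s) y = sa / s * I" by simp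
  have "2 / sqrt alpha * I = 2 * sigma2 * (sa / s * I)"
    using sa assms unfolding s_def sa_def by (simp add: field_simps)
  then show ?thesis
    unfolding SURE_def s_def[symmetric] sa_def[symmetric] I_def[symmetric] A[symmetric] Dv
    by (simp add: sa_def)
qed

end
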